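(* Let $(X,\tau)$ be a topological space, $\delta$ a quasi-proximity compatible with $\tau$ such that $\mathcal{V}_\delta$ is transitive, $\mathcal{B}=\mathcal{B}(\mathcal{V}_\delta)$, and let $\mathcal{V}$ be a transitive quasi-uniformity on $X$. Then $\mathcal{V}\in\pi(\delta)$ if and only if $\mathcal{V}_\delta\subseteq\mathcal{V}$ and for every transitive $U\in\mathcal{V}$ and every $A\subseteq X$ we have $U(A)\in\mathcal{B}$.
   Context: Quasi-uniformities and quasi-proximities are in the sense of Fletcher–Lindgren. $\pi(\delta)$ is the set of quasi-uniformities inducing the quasi-proximity $\delta$; $\mathcal{V}_\delta$ is its coarsest (totally bounded) element. A quasi-uniformity is transitive if it has a base of transitive entourages ($U\circ U\subseteq U$). $U(A)=\bigcup_{a\in A}\{y:(a,y)\in U\}$. For $N\subseteq X$, $U_N=(N\times N)\cup((X\setminus N)\times X)$ and $\mathcal{B}(\mathcal{V}_\delta)=\{N\in\tau:U_N\in\mathcal{V}_\delta\}$, an l-base of $\tau$ (closed under finite unions and intersections, containing $\emptyset,X$). *)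

theory Defs
  imports "HOL-Analysis.Analysis"
begin

definition quasi_uniformity :: "'a set \<Rightarrow> ('a \<times> 'a) set set \<Rightarrow> bool" where
  "quasi_uniformity X \<U> \<longleftrightarrow>
     \<U> \<noteq> {} \<and>
     (\<forall>U\<in>\<U>. Id_on X \<subseteq> U \<and> U \<subseteq> X \<times> X) \<and>
     (\<forall>U\<in>\<U>. \<forall>W. U \<subseteq> W \<and> W \<subseteq> X \<times> X \<longrightarrow> W \<in> \<U>) \<and>
     (\<forall>U\<in>\<U>. \<forall>V\<in>\<U>. U \<inter> V \<in> \<U>) \<and>
     (\<forall>U\<in>\<U>. \<exists>V\<in>\<U>. V O V \<subseteq> U)"

definition quasi_proximity :: "'a set \<Rightarrow> ('a set \<Rightarrow> 'a set \<Rightarrow> bool) \<Rightarrow> bool" where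
  "quasi_proximity X \<delta> \<longleftrightarrow>
     (\<forall>A B C. A \<subseteq> X \<and> B \<subseteq> X \<and> C \<subseteq> X \<longrightarrow>
        (\<delta> A (B \<union> C) \<longleftrightarrow> \<delta> A B \<or> \<delta> A C) \<and>
        (\<delta> (A \<union> B) C \<longleftrightarrow> \<delta> A C \<or> \<delta> B C)) \<and>
     \<not> \<delta> X {} \<and> \<not> \<delta> {} X \<and>
     (\<forall>A B. A \<subseteq> X \<and> B \<subseteq> X \<and> A \<inter> B \<noteq> {} \<longrightarrow> \<delta> A B) \<and>
     (\<forall>A B. A \<subseteq> X \<and> B \<subseteq> X \<and> \<not> \<delta> A B \<longrightarrow>
        (\<exists>C\<subseteq>X. \<not> \<delta> A C \<and> \<not> \<delta> (X - C) B))"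

definition qprox_compatible :: "'a topology \<Rightarrow> ('a set \<Rightarrow> 'a set \<Rightarrow> bool) \<Rightarrow> bool" where
  "qprox_compatible \<tau> \<delta> \<longleftrightarrow>
     (\<forall>A x. A \<subseteq> topspace \<tau> \<and> x \<in> topspace \<tau> \<longrightarrow>
        (x \<in> \<tau> closure_of A \<longleftrightarrow> \<delta> {x} A))"

definition qprox_of :: "('a \<times> 'a) set set \<Rightarrow> 'a set \<Rightarrow> 'a set \<Rightarrow> bool" where
  "qprox_of \<U> A B \<longleftrightarrow> (\<forall>U\<in>\<U>. U `` A \<inter> B \<noteq> {})"

definition qprox_class :: "'a set \<Rightarrow> ('a set \<Rightarrow> 'a set \<Rightarrow> bool) \<Rightarrow> ('a \<times> 'a) set set set" where
  "qprox_class X \<delta> = {\<U>. quasi_uniformity X \<U> \<and>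
      (\<forall>A B. A \<subseteq> X \<and> B \<subseteq> X \<longrightarrow> (qprox_of \<U> A B \<longleftrightarrow> \<delta> A B))}"

definition coarsest_qu :: "'a set \<Rightarrow> ('a set \<Rightarrow> 'a set \<Rightarrow> bool) \<Rightarrow> ('a \<times> 'a) set set" where
  "coarsest_qu X \<delta> = (THE \<V>. \<V> \<in> qprox_class X \<delta> \<and> (\<forall>\<W>\<in>qprox_class X \<delta>. \<V> \<subseteq> \<W>))"

definition transitive_qu :: "'a set \<Rightarrow> ('a \<times> 'a) set set \<Rightarrow> bool" where
  "transitive_qu X \<U> \<longleftrightarrow> quasi_uniformity X \<U> \<and> (\<forall>U\<in>\<U>. \<exists>W\<in>\<U>. trans W \<and> W \<subseteq> U)"

definition U_N :: "'a set \<Rightarrow> 'a set \<Rightarrow> ('a \<times> 'a) set" where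
  "U_N X N = (N \<times> N) \<union> ((X - N) \<times> X)"

definition lbase :: "'a topology \<Rightarrow> ('a \<times> 'a) set set \<Rightarrow> 'a set set" where
  "lbase \<tau> \<V> = {N. openin \<tau> N \<and> U_N (topspace \<tau>) N \<in> \<V>}"

end

theory Submission
  imports Defs
begin

definition UAB :: "'a set \<Rightarrow> 'a set \<Rightarrow> 'a set \<Rightarrow> ('a \<times> 'a) set" where
  "UAB X A B = ((X - A) \<times> X) \<union> (X \<times> (X - B))"

definition goodp :: "'a set \<Rightarrow> ('a set \<Rightarrow> 'a set \<Rightarrow> bool) \<Rightarrow> ('a set \<times> 'a set) set" where
  "goodp X \<delta> = {p. fst p \<subseteq> X \<and> snd p \<subseteq> X \<and> \<not> \<delta> (fst p) (snd p)}"

definition Gq :: "'a set \<Rightarrow> ('a set \<times> 'a set) set \<Rightarrow> ('a \<times> 'a) set" where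
  "Gq X F = (X \<times> X) \<inter> (\<Inter>p\<in>F. UAB X (fst p) (snd p))"

definition Wq :: "'a set \<Rightarrow> ('a set \<Rightarrow> 'a set \<Rightarrow> bool) \<Rightarrow> ('a \<times> 'a) set set" where
  "Wq X \<delta> = {U. U \<subseteq> X \<times> X \<and> (\<exists>F. finite F \<and> F \<subseteq> goodp X \<delta> \<and> Gq X F \<subseteq> U)}"

lemma mem_Gq: "(x, y) \<in> Gq X F \<longleftrightarrow> x \<in> X \<and> y \<in> X \<and> (\<forall>p\<in>F. x \<in> fst p \<longrightarrow> y \<notin> snd p)"
  unfolding Gq_def UAB_def by auto

lemma qp_un1: assumes qp: "quasi_proximity X \<delta>" "A \<subseteq> X" "B \<subseteq> X" "C \<subseteq> X"
  shows "\<delta> (A \<union> B) C \<longleftrightarrow> \<delta> A C \<or> \<delta> B C"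
proof -
  have "\<forall>A B C. A \<subseteq> X \<and> B \<subseteq> X \<and> C \<subseteq> X \<longrightarrow>
        (\<delta> A (B \<union> C) \<longleftrightarrow> \<delta> A B \<or> \<delta> A C) \<and>
        (\<delta> (A \<union> B) C \<longleftrightarrow> \<delta> A C \<or> \<delta> B C)" using qp(1) unfolding quasi_proximity_def by (elim conjE)
  then show ?thesis using qp by simp
qed
lemma qp_un2: assumes qp: "quasi_proximity X \<delta>" "A \<subseteq> X" "B \<subseteq> X" "C \<subseteq> X"
  shows "\<delta> A (B \<union> C) \<longleftrightarrow> \<delta> A B \<or> \<delta> A C"
proof -
  have "\<forall>A B C. A \<subseteq> X \<and> B \<subseteq> X \<and> C \<subseteq> X \<longrightarrow>
        (\<delta> A (B \<union> C) \<longleftrightarrow> \<delta> A B \<or> \<delta> A C) \<and>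
        (\<delta> (A \<union> B) C \<longleftrightarrow> \<delta> A C \<or> \<delta> B C)" using qp(1) unfolding quasi_proximity_def by (elim conjE)
  then show ?thesis using qp by simp
qed
lemma qp_XE: "quasi_proximity X \<delta> \<Longrightarrow> \<not> \<delta> X {} \<and> \<not> \<delta> {} X"
  unfolding quasi_proximity_def by (elim conjE) simp
lemma qp_meet: "quasi_proximity X \<delta> \<Longrightarrow> A \<subseteq> X \<Longrightarrow> B \<subseteq> X \<Longrightarrow> A \<inter> B \<noteq> {} \<Longrightarrow> \<delta> A B"
  unfolding quasi_proximity_def by (elim conjE) simp
lemma qp_sep: "quasi_proximity X \<delta> \<Longrightarrow> A \<subseteq> X \<Longrightarrow> B \<subseteq> X \<Longrightarrow> \<not> \<delta> A B \<Longrightarrow>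
   \<exists>C\<subseteq>X. \<not> \<delta> A C \<and> \<not> \<delta> (X - C) B"
  unfolding quasi_proximity_def by (elim conjE) simp
lemma qp_mono:
  assumes qp: "quasi_proximity X \<delta>" and "A \<subseteq> A'" "B \<subseteq> B'" "A' \<subseteq> X" "B' \<subseteq> X" "\<delta> A B"
  shows "\<delta> A' B'"
proof -
  have AX: "A \<subseteq> X" "B \<subseteq> X" using assms by auto
  have "\<delta> (A \<union> A') B \<longleftrightarrow> \<delta> A B \<or> \<delta> A' B"
    using qp_un1[OF qp AX(1) assms(4) AX(2)] .
  hence "\<delta> A' B" using assms by (simp add: Un_absorb1)
  moreover have "\<delta> A' (B \<union> B') \<longleftrightarrow> \<delta> A' B \<or> \<delta> A' B'"
    using qp_un2[OF qp assms(4) AX(2) assms(5)] .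
  ultimately show ?thesis using assms by (simp add: Un_absorb1)
qed
lemma qp_empty1: assumes qp: "quasi_proximity X \<delta>" "B \<subseteq> X" shows "\<not> \<delta> {} B"
  using qp_mono[OF qp(1), of "{}" "{}" B X] qp qp_XE[OF qp(1)] by auto
lemma qp_empty2: assumes qp: "quasi_proximity X \<delta>" "A \<subseteq> X" shows "\<not> \<delta> A {}"
  using qp_mono[OF qp(1), of A X "{}" "{}"] qp qp_XE[OF qp(1)] by auto

lemma key:
  assumes qp: "quasi_proximity X \<delta>" and fin: "finite F"
  shows "F \<subseteq> goodp X \<delta> \<Longrightarrow> A \<subseteq> X \<Longrightarrow> B \<subseteq> X \<Longrightarrow>
     (\<forall>x\<in>A. \<forall>y\<in>B. \<exists>p\<in>F. x \<in> fst p \<and> y \<in> snd p) \<Longrightarrow> \<not> \<delta> A B"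
  using fin
proof (induction F arbitrary: A B)
  case empty
  hence "A = {} \<or> B = {}" by auto
  then show ?case using qp_empty1[OF qp] qp_empty2[OF qp] empty by blast
next
  case (insert p F)
  obtain A0 B0 where p: "p = (A0, B0)" by (cases p)
  have g: "A0 \<subseteq> X" "B0 \<subseteq> X" "\<not> \<delta> A0 B0" using insert(4) p unfolding goodp_def by auto
  have F: "F \<subseteq> goodp X \<delta>" using insert(4) by auto
  have h1: "\<not> \<delta> (A - A0) B"
    apply (rule insert.IH[OF F]) using insert(5,6,7) p by fastforce+
  have h2: "\<not> \<delta> (A \<inter> A0) (B \<inter> B0)"
    using qp_mono[OF qp, of "A \<inter> A0" A0 "B \<inter> B0" B0] g by blast
  have h3: "\<not> \<delta> (A \<inter> A0) (B - B0)"
    apply (rule insert.IH[OF F]) using insert(5,6,7) p by fastforce+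
  have "B = (B \<inter> B0) \<union> (B - B0)" by auto
  hence h4: "\<not> \<delta> (A \<inter> A0) B" using h2 h3 qp_un2[OF qp, of "A \<inter> A0" "B \<inter> B0" "B - B0"] insert(5,6)
    by auto
  have "A = (A \<inter> A0) \<union> (A - A0)" by auto
  then show ?case using h1 h4 qp_un1[OF qp, of "A \<inter> A0" "A - A0" B] insert(5,6) by auto
qed

lemma Gq_sub: "Gq X F \<subseteq> X \<times> X" unfolding Gq_def by auto

lemma Wq_qu: assumes qp: "quasi_proximity X \<delta>" shows "quasi_uniformity X (Wq X \<delta>)"
  unfolding quasi_uniformity_def
proof (intro conjI ballI allI impI)
  have "X \<times> X \<in> Wq X \<delta>" unfolding Wq_def using Gq_sub by (intro CollectI conjI exI[of _ "{}"]) auto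
  then show "Wq X \<delta> \<noteq> {}" by auto
next
  fix U assume U: "U \<in> Wq X \<delta>"
  then obtain F where F: "finite F" "F \<subseteq> goodp X \<delta>" "Gq X F \<subseteq> U" "U \<subseteq> X \<times> X"
    unfolding Wq_def by auto
  show "U \<subseteq> X \<times> X" using F by auto
  have "Id_on X \<subseteq> Gq X F"
  proof
    fix z assume "z \<in> Id_on X"
    then obtain x where z: "z = (x, x)" "x \<in> X" by (auto simp: Id_on_def)
    have "\<forall>p\<in>F. x \<in> fst p \<longrightarrow> x \<notin> snd p"
    proof (intro ballI impI notI)
      fix p assume "p \<in> F" "x \<in> fst p" "x \<in> snd p"
      with F(2) have "fst p \<subseteq> X" "snd p \<subseteq> X" "\<not> \<delta> (fst p) (snd p)" unfolding goodp_def by auto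
      moreover have "fst p \<inter> snd p \<noteq> {}" using \<open>x \<in> fst p\<close> \<open>x \<in> snd p\<close> by auto
      ultimately show False using qp_meet[OF qp] by blast
    qed
    then show "z \<in> Gq X F" using z by (simp add: mem_Gq)
  qed
  then show "Id_on X \<subseteq> U" using F by auto
  show "\<And>W. U \<subseteq> W \<and> W \<subseteq> X \<times> X \<Longrightarrow> W \<in> Wq X \<delta>"
    using F unfolding Wq_def by blast
  show "\<And>V. V \<in> Wq X \<delta> \<Longrightarrow> U \<inter> V \<in> Wq X \<delta>"
  proof -
    fix V assume "V \<in> Wq X \<delta>"
    then obtain F' where F': "finite F'" "F' \<subseteq> goodp X \<delta>" "Gq X F' \<subseteq> V" "V \<subseteq> X \<times> X"
      unfolding Wq_def by auto
    have "Gq X (F \<union> F') \<subseteq> U \<inter> V" using F F' unfolding Gq_def by auto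
    then show "U \<inter> V \<in> Wq X \<delta>" unfolding Wq_def using F F'
      by (intro CollectI conjI exI[of _ "F \<union> F'"]) auto
  qed
  have "\<forall>p\<in>F. \<exists>C. C \<subseteq> X \<and> \<not> \<delta> (fst p) C \<and> \<not> \<delta> (X - C) (snd p)"
  proof
    fix p assume "p \<in> F"
    then show "\<exists>C. C \<subseteq> X \<and> \<not> \<delta> (fst p) C \<and> \<not> \<delta> (X - C) (snd p)"
      using qp_sep[OF qp] F(2) unfolding goodp_def by blast
  qed
  then obtain c where c: "\<forall>p\<in>F. c p \<subseteq> X \<and> \<not> \<delta> (fst p) (c p) \<and> \<not> \<delta> (X - c p) (snd p)"
    by (metis bchoice)
  define F' where "F' = (\<lambda>p. (fst p, c p)) ` F \<union> (\<lambda>p. (X - c p, snd p)) ` F"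
  have F'g1: "finite F'" using F unfolding F'_def by auto
  have F'g2: "F' \<subseteq> goodp X \<delta>"
  proof
    fix q assume "q \<in> F'"
    then obtain p where p: "p \<in> F" "q = (fst p, c p) \<or> q = (X - c p, snd p)" unfolding F'_def by auto
    have "fst p \<subseteq> X" "snd p \<subseteq> X" using p(1) F(2) unfolding goodp_def by auto
    moreover have "c p \<subseteq> X" "\<not> \<delta> (fst p) (c p)" "\<not> \<delta> (X - c p) (snd p)" using p(1) c by auto
    ultimately show "q \<in> goodp X \<delta>" using p(2) unfolding goodp_def by auto
  qed
  note F'g = F'g1 F'g2
  have sq: "Gq X F' O Gq X F' \<subseteq> Gq X F"
  proof
    fix z assume "z \<in> Gq X F' O Gq X F'"
    then obtain x y w where z: "z = (x, w)" "(x, y) \<in> Gq X F'" "(y, w) \<in> Gq X F'" by auto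
    have "\<forall>p\<in>F. x \<in> fst p \<longrightarrow> w \<notin> snd p"
    proof (intro ballI impI)
      fix p assume p: "p \<in> F" "x \<in> fst p"
      have "(fst p, c p) \<in> F'" "(X - c p, snd p) \<in> F'" using p unfolding F'_def by auto
      note q = this
      have xy: "\<forall>q\<in>F'. x \<in> fst q \<longrightarrow> y \<notin> snd q" "y \<in> X" using z(2) by (auto simp: mem_Gq)
      have yw: "\<forall>q\<in>F'. y \<in> fst q \<longrightarrow> w \<notin> snd q" using z(3) by (auto simp: mem_Gq)
      have "y \<notin> c p" using xy(1) q(1) p(2) by fastforce
      hence "y \<in> X - c p" using xy(2) by blast
      then show "w \<notin> snd p" using yw q(2) by fastforce
    qed
    then show "z \<in> Gq X F" using z by (auto simp: mem_Gq)
  qed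
  have "Gq X F' \<in> Wq X \<delta>" unfolding Wq_def using F'g Gq_sub by blast
  then show "\<exists>V\<in>Wq X \<delta>. V O V \<subseteq> U" using sq F by blast
qed

lemma Gq_single: "A \<subseteq> X \<Longrightarrow> B \<subseteq> X \<Longrightarrow> \<not> \<delta> A B \<Longrightarrow> Gq X {(A, B)} \<in> Wq X \<delta>"
  unfolding Wq_def goodp_def by (intro CollectI conjI exI[of _ "{(A, B)}"] Gq_sub) auto

lemma Wq_class: assumes qp: "quasi_proximity X \<delta>" shows "Wq X \<delta> \<in> qprox_class X \<delta>"
  unfolding qprox_class_def
proof (intro CollectI conjI allI impI Wq_qu[OF qp])
  fix A B assume AB: "A \<subseteq> X \<and> B \<subseteq> X"
  show "qprox_of (Wq X \<delta>) A B = \<delta> A B"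
  proof
    assume q: "qprox_of (Wq X \<delta>) A B"
    show "\<delta> A B"
    proof (rule ccontr)
      assume n: "\<not> \<delta> A B"
      have "Gq X {(A, B)} \<in> Wq X \<delta>" using Gq_single AB n by blast
      moreover have "Gq X {(A, B)} `` A \<inter> B = {}" by (auto simp: mem_Gq)
      ultimately show False using q unfolding qprox_of_def by blast
    qed
  next
    assume d: "\<delta> A B"
    show "qprox_of (Wq X \<delta>) A B" unfolding qprox_of_def
    proof (intro ballI notI)
      fix U assume "U \<in> Wq X \<delta>" and e: "U `` A \<inter> B = {}"
      then obtain F where F: "finite F" "F \<subseteq> goodp X \<delta>" "Gq X F \<subseteq> U"
        unfolding Wq_def by auto
      have "\<forall>x\<in>A. \<forall>y\<in>B. \<exists>p\<in>F. x \<in> fst p \<and> y \<in> snd p"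
      proof (intro ballI)
        fix x y assume "x \<in> A" "y \<in> B"
        hence "(x, y) \<notin> Gq X F" using e F(3) by auto
        then show "\<exists>p\<in>F. x \<in> fst p \<and> y \<in> snd p" using AB \<open>x \<in> A\<close> \<open>y \<in> B\<close> by (auto simp: mem_Gq)
      qed
      moreover have "A \<subseteq> X" "B \<subseteq> X" using AB by auto
      ultimately show False using key[OF qp F(1) F(2)] d by blast
    qed
  qed
qed

lemma qu_sub: "quasi_uniformity X \<U> \<Longrightarrow> U \<in> \<U> \<Longrightarrow> U \<subseteq> X \<times> X"
  unfolding quasi_uniformity_def by (elim conjE) meson
lemma qu_diag: "quasi_uniformity X \<U> \<Longrightarrow> U \<in> \<U> \<Longrightarrow> Id_on X \<subseteq> U"
  unfolding quasi_uniformity_def by (elim conjE) meson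
lemma qu_up: "quasi_uniformity X \<U> \<Longrightarrow> U \<in> \<U> \<Longrightarrow> U \<subseteq> W \<Longrightarrow> W \<subseteq> X \<times> X \<Longrightarrow> W \<in> \<U>"
  unfolding quasi_uniformity_def by (elim conjE) meson
lemma qu_int: "quasi_uniformity X \<U> \<Longrightarrow> U \<in> \<U> \<Longrightarrow> V \<in> \<U> \<Longrightarrow> U \<inter> V \<in> \<U>"
  unfolding quasi_uniformity_def by (elim conjE) meson
lemma qu_ne: "quasi_uniformity X \<U> \<Longrightarrow> \<U> \<noteq> {}"
  unfolding quasi_uniformity_def by (elim conjE) meson
lemma qu_XX: "quasi_uniformity X \<U> \<Longrightarrow> X \<times> X \<in> \<U>"
proof -
  assume q: "quasi_uniformity X \<U>"
  then obtain U where "U \<in> \<U>" using qu_ne by blast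
  then show ?thesis using qu_up[OF q, of U] qu_sub[OF q] by blast
qed

lemma inter_in:
  assumes qu: "quasi_uniformity X \<U>" and fin: "finite F"
  shows "(\<forall>p\<in>F. UAB X (fst p) (snd p) \<inter> X \<times> X \<in> \<U>) \<Longrightarrow> Gq X F \<in> \<U>"
  using fin
proof (induction F)
  case empty
  show ?case using qu_XX[OF qu] unfolding Gq_def by simp
next
  case (insert p F)
  have "Gq X (insert p F) = (UAB X (fst p) (snd p) \<inter> X \<times> X) \<inter> Gq X F" unfolding Gq_def by auto
  then show ?case using insert qu_int[OF qu] by simp
qed

lemma Wq_least: assumes "\<U> \<in> qprox_class X \<delta>" shows "Wq X \<delta> \<subseteq> \<U>"
proof
  have qu: "quasi_uniformity X \<U>" and ind: "\<forall>A B. A \<subseteq> X \<and> B \<subseteq> X \<longrightarrow> (qprox_of \<U> A B \<longleftrightarrow> \<delta> A B)"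
    using assms unfolding qprox_class_def by auto
  fix U assume "U \<in> Wq X \<delta>"
  then obtain F where F: "finite F" "F \<subseteq> goodp X \<delta>" "Gq X F \<subseteq> U" "U \<subseteq> X \<times> X"
    unfolding Wq_def by auto
  have "\<forall>p\<in>F. UAB X (fst p) (snd p) \<inter> X \<times> X \<in> \<U>"
  proof
    fix p assume "p \<in> F"
    hence g: "fst p \<subseteq> X" "snd p \<subseteq> X" "\<not> \<delta> (fst p) (snd p)" using F(2) unfolding goodp_def by auto
    then obtain V where V: "V \<in> \<U>" "V `` fst p \<inter> snd p = {}" using ind unfolding qprox_of_def by blast
    have "V \<subseteq> X \<times> X" using qu_sub[OF qu V(1)] .
    hence "V \<subseteq> UAB X (fst p) (snd p) \<inter> X \<times> X" using V(2) unfolding UAB_def by blast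
    then show "UAB X (fst p) (snd p) \<inter> X \<times> X \<in> \<U>" using qu_up[OF qu V(1)] by blast
  qed
  then have "Gq X F \<in> \<U>" using inter_in[OF qu F(1)] by blast
  then show "U \<in> \<U>" using F qu_up[OF qu] by blast
qed

lemma coarsest_eq: assumes qp: "quasi_proximity X \<delta>" shows "coarsest_qu X \<delta> = Wq X \<delta>"
  unfolding coarsest_qu_def
proof (rule the_equality)
  show "Wq X \<delta> \<in> qprox_class X \<delta> \<and> (\<forall>\<W>\<in>qprox_class X \<delta>. Wq X \<delta> \<subseteq> \<W>)"
    using Wq_class[OF qp] Wq_least by blast
  fix V assume "V \<in> qprox_class X \<delta> \<and> (\<forall>\<W>\<in>qprox_class X \<delta>. V \<subseteq> \<W>)"
  then show "V = Wq X \<delta>" using Wq_class[OF qp] Wq_least by blast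
qed

lemma UN_iff:
  assumes qp: "quasi_proximity X \<delta>" and N: "N \<subseteq> X"
  shows "U_N X N \<in> Wq X \<delta> \<longleftrightarrow> \<not> \<delta> N (X - N)"
proof
  assume "U_N X N \<in> Wq X \<delta>"
  moreover have "U_N X N `` N \<inter> (X - N) = {}" unfolding U_N_def by auto
  ultimately have "\<not> qprox_of (Wq X \<delta>) N (X - N)" unfolding qprox_of_def by blast
  then show "\<not> \<delta> N (X - N)" using Wq_class[OF qp] N unfolding qprox_class_def by blast
next
  assume n: "\<not> \<delta> N (X - N)"
  have "Gq X {(N, X - N)} \<subseteq> U_N X N" unfolding U_N_def by (auto simp: mem_Gq)
  moreover have "U_N X N \<subseteq> X \<times> X" using N unfolding U_N_def by auto
  ultimately show "U_N X N \<in> Wq X \<delta>" unfolding Wq_def goodp_def using n N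
    by (intro CollectI conjI exI[of _ "{(N, X - N)}"]) auto
qed

theorem corollary2p5:
  fixes \<tau> :: "'a topology" and \<delta> :: "'a set \<Rightarrow> 'a set \<Rightarrow> bool"
    and \<V> :: "('a \<times> 'a) set set"
  assumes "quasi_proximity (topspace \<tau>) \<delta>"
    and "qprox_compatible \<tau> \<delta>"
    and "transitive_qu (topspace \<tau>) (coarsest_qu (topspace \<tau>) \<delta>)"
    and "transitive_qu (topspace \<tau>) \<V>"
  shows "\<V> \<in> qprox_class (topspace \<tau>) \<delta> \<longleftrightarrow>
           (coarsest_qu (topspace \<tau>) \<delta> \<subseteq> \<V> \<and>
            (\<forall>U\<in>\<V>. trans U \<longrightarrow>
               (\<forall>A. A \<subseteq> topspace \<tau> \<longrightarrow> U `` A \<in> lbase \<tau> (coarsest_qu (topspace \<tau>) \<delta>))))"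
proof -
  define X where "X = topspace \<tau>"
  have qp: "quasi_proximity X \<delta>" using assms(1) X_def by simp
  have C: "coarsest_qu X \<delta> = Wq X \<delta>" using coarsest_eq[OF qp] .
  have qu: "quasi_uniformity X \<V>" using assms(4) X_def unfolding transitive_qu_def by simp
  have Vsub: "\<And>U. U \<in> \<V> \<Longrightarrow> U \<subseteq> X \<times> X" using qu_sub[OF qu] by blast
  show ?thesis unfolding X_def[symmetric] C
  proof
    assume V: "\<V> \<in> qprox_class X \<delta>"
    have ind: "\<forall>A B. A \<subseteq> X \<and> B \<subseteq> X \<longrightarrow> (qprox_of \<V> A B \<longleftrightarrow> \<delta> A B)"
      using V unfolding qprox_class_def by auto
    have "\<forall>U\<in>\<V>. trans U \<longrightarrow> (\<forall>A. A \<subseteq> X \<longrightarrow> U `` A \<in> lbase \<tau> (Wq X \<delta>))"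
    proof (intro ballI impI allI)
      fix U A assume U: "U \<in> \<V>" "trans U" and A: "A \<subseteq> X"
      define N where "N = U `` A"
      have NX: "N \<subseteq> X" using Vsub[OF U(1)] N_def by auto
      have "U `` N \<inter> (X - N) = {}" using U(2) unfolding N_def trans_def by blast
      hence "\<not> qprox_of \<V> N (X - N)" using U(1) unfolding qprox_of_def by blast
      hence nd: "\<not> \<delta> N (X - N)" using ind NX by blast
      have UN: "U_N X N \<in> Wq X \<delta>" using UN_iff[OF qp NX] nd by simp
      have "\<tau> closure_of (X - N) \<subseteq> X - N"
      proof
        fix x assume x: "x \<in> \<tau> closure_of (X - N)"
        hence xX: "x \<in> X" using closure_of_subset_topspace X_def by fastforce
        hence "\<delta> {x} (X - N)" using assms(2) x unfolding qprox_compatible_def X_def by blast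
        moreover have "x \<notin> N"
        proof
          assume "x \<in> N"
          with \<open>\<delta> {x} (X - N)\<close> have "\<delta> N (X - N)" using qp_mono[OF qp, of "{x}" N "X - N" "X - N"] NX by blast
          with nd show False by simp
        qed
        ultimately show "x \<in> X - N" using xX by blast
      qed
      hence "closedin \<tau> (X - N)" using closure_of_subset_eq X_def by (metis Diff_subset)
      hence "openin \<tau> N" using NX X_def by (metis openin_closedin_eq Diff_Diff_Int inf.absorb_iff2)
      then show "U `` A \<in> lbase \<tau> (Wq X \<delta>)" using UN unfolding lbase_def N_def X_def by simp
    qed
    then show "Wq X \<delta> \<subseteq> \<V> \<and> (\<forall>U\<in>\<V>. trans U \<longrightarrow> (\<forall>A. A \<subseteq> X \<longrightarrow> U `` A \<in> lbase \<tau> (Wq X \<delta>)))"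
      using Wq_least[OF V] by blast
  next
    assume H: "Wq X \<delta> \<subseteq> \<V> \<and> (\<forall>U\<in>\<V>. trans U \<longrightarrow> (\<forall>A. A \<subseteq> X \<longrightarrow> U `` A \<in> lbase \<tau> (Wq X \<delta>)))"
    show "\<V> \<in> qprox_class X \<delta>" unfolding qprox_class_def
    proof (intro CollectI conjI allI impI qu)
      fix A B assume AB: "A \<subseteq> X \<and> B \<subseteq> X"
      show "qprox_of \<V> A B = \<delta> A B"
      proof
        assume q: "qprox_of \<V> A B"
        show "\<delta> A B"
        proof (rule ccontr)
          assume n: "\<not> \<delta> A B"
          have "Gq X {(A, B)} \<in> Wq X \<delta>" using Gq_single AB n by blast
          moreover have "Gq X {(A, B)} `` A \<inter> B = {}" by (auto simp: mem_Gq)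
          ultimately show False using q H unfolding qprox_of_def by blast
        qed
      next
        assume d: "\<delta> A B"
        show "qprox_of \<V> A B" unfolding qprox_of_def
        proof (intro ballI)
          fix U assume U: "U \<in> \<V>"
          then obtain W where W: "W \<in> \<V>" "trans W" "W \<subseteq> U"
            using assms(4) X_def unfolding transitive_qu_def by blast
          define N where "N = W `` A"
          have NX: "N \<subseteq> X" using Vsub[OF W(1)] N_def by auto
          have "N \<in> lbase \<tau> (Wq X \<delta>)" using H W AB N_def by blast
          hence "U_N X N \<in> Wq X \<delta>" unfolding lbase_def X_def by simp
          hence nd: "\<not> \<delta> N (X - N)" using UN_iff[OF qp NX] by simp
          have "Id_on X \<subseteq> W" using qu_diag[OF qu W(1)] .
          hence AN: "A \<subseteq> N" using AB unfolding N_def by auto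
          have dN: "\<delta> N B" using qp_mono[OF qp AN, of B B] NX AB d by blast
          have "\<not> \<delta> N (B - N)" using qp_mono[OF qp, of N N "B - N" "X - N"] NX AB nd by blast
          moreover have "B = (B \<inter> N) \<union> (B - N)" by auto
          ultimately have "\<delta> N (B \<inter> N)" using dN qp_un2[OF qp, of N "B \<inter> N" "B - N"] NX AB by auto
          hence "B \<inter> N \<noteq> {}" using qp_empty2[OF qp NX] by auto
          then show "U `` A \<inter> B \<noteq> {}" using W(3) unfolding N_def by auto
        qed
      qed
    qed
  qed
qed

end
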